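(* Let $n\ge 2$ and let $G=K_{1,n}$ be the star with center $v_0$ and leaves $v_1,\dots,v_n$, where the edge $v_0v_j$ has weight $w_j\in(0,1)$. Then \[\operatorname{eptw}(G)=\min_{1\le i\le n}\left(\frac{1}{w_i}+\frac{1}{1-W_i}\right),\qquad W_i=\prod_{j\ne i}(1-w_j).\]
   Context: Let $G$ be a finite simple graph in which each edge $uv$ has a weight $w_{uv}\in(0,1)$. Weighted zero forcing: start with a set $B\subseteq V(G)$ of blue vertices, all other vertices white. In each round, simultaneously, for every blue vertex $u$ that has exactly one white neighbor $v$ (with respect to the coloring at the start of the round), $u$ attempts to force $v$, succeeding with probability $w_{uv}$, all attempts being independent; a white vertex becomes blue at the end of the round if at least one attempt on it succeeds. $B$ is a weighted zero forcing set of $G$ if this process can eventually color all of $V(G)$ blue (equivalently, $B$ is a zero forcing set of the underlying unweighted graph under the standard rule); $\operatorname{Z}(G)$ is the minimum size of such a set. $\operatorname{ptw}(G,B)$ is the random variable giving the round in which the last white vertex becomes blue ($0$ if $B=V(G)$); $\operatorname{eptw}(G,B)=\mathbb{E}[\operatorname{ptw}(G,B)]$; $\operatorname{eptw}(G)=\min\{\operatorname{eptw}(G,B): B$ a weighted zero forcing set with $|B|=\operatorname{Z}(G)\}$. *)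

theory Defs
  imports "HOL-Probability.Probability"
begin

text \<open>A finite simple graph is given by a vertex set V and a symmetric irreflexive
edge relation E; edge weights by a function w (w u v is the weight of edge uv).\<close>

definition white_nbrs :: "'a set \<Rightarrow> ('a \<Rightarrow> 'a \<Rightarrow> bool) \<Rightarrow> 'a set \<Rightarrow> 'a \<Rightarrow> 'a set" where
  "white_nbrs V E B u = {v \<in> V. E u v \<and> v \<notin> B}"

definition can_force :: "'a set \<Rightarrow> ('a \<Rightarrow> 'a \<Rightarrow> bool) \<Rightarrow> 'a set \<Rightarrow> 'a \<Rightarrow> 'a \<Rightarrow> bool" where
  "can_force V E B u v \<longleftrightarrow> u \<in> B \<and> white_nbrs V E B u = {v}"

definition zf_step :: "'a set \<Rightarrow> ('a \<Rightarrow> 'a \<Rightarrow> bool) \<Rightarrow> 'a set \<Rightarrow> 'a set" where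
  "zf_step V E B = B \<union> {v. \<exists>u. can_force V E B u v}"

definition is_zfs :: "'a set \<Rightarrow> ('a \<Rightarrow> 'a \<Rightarrow> bool) \<Rightarrow> 'a set \<Rightarrow> bool" where
  "is_zfs V E B \<longleftrightarrow> B \<subseteq> V \<and> (\<exists>k. (zf_step V E ^^ k) B = V)"

definition zf_number :: "'a set \<Rightarrow> ('a \<Rightarrow> 'a \<Rightarrow> bool) \<Rightarrow> nat" where
  "zf_number V E = (LEAST k. \<exists>B. is_zfs V E B \<and> card B = k)"

text \<open>Probability space of all forcing attempts: coin (k,u,v) says whether the attempt
of u to force v in round k+1 succeeds; all independent, success probability w u v.\<close>
definition coin_space :: "('a \<Rightarrow> 'a \<Rightarrow> real) \<Rightarrow> (nat \<times> 'a \<times> 'a \<Rightarrow> bool) measure" where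
  "coin_space w = PiM UNIV (\<lambda>(k, u, v). measure_pmf (bernoulli_pmf (w u v)))"

fun blue_at :: "'a set \<Rightarrow> ('a \<Rightarrow> 'a \<Rightarrow> bool) \<Rightarrow> 'a set \<Rightarrow> (nat \<times> 'a \<times> 'a \<Rightarrow> bool) \<Rightarrow> nat \<Rightarrow> 'a set" where
  "blue_at V E B \<omega> 0 = B"
| "blue_at V E B \<omega> (Suc k) =
     blue_at V E B \<omega> k \<union> {v. \<exists>u. can_force V E (blue_at V E B \<omega> k) u v \<and> \<omega> (k, u, v)}"

definition ptw :: "'a set \<Rightarrow> ('a \<Rightarrow> 'a \<Rightarrow> bool) \<Rightarrow> 'a set \<Rightarrow> (nat \<times> 'a \<times> 'a \<Rightarrow> bool) \<Rightarrow> ennreal" where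
  "ptw V E B \<omega> = (if \<exists>k. blue_at V E B \<omega> k = V
      then of_nat (LEAST k. blue_at V E B \<omega> k = V) else \<infinity>)"

definition eptw_set :: "'a set \<Rightarrow> ('a \<Rightarrow> 'a \<Rightarrow> bool) \<Rightarrow> ('a \<Rightarrow> 'a \<Rightarrow> real) \<Rightarrow> 'a set \<Rightarrow> ennreal" where
  "eptw_set V E w B = (\<integral>\<^sup>+ \<omega>. ptw V E B \<omega> \<partial>coin_space w)"

definition eptw :: "'a set \<Rightarrow> ('a \<Rightarrow> 'a \<Rightarrow> bool) \<Rightarrow> ('a \<Rightarrow> 'a \<Rightarrow> real) \<Rightarrow> ennreal" where
  "eptw V E w = (INF B \<in> {B. is_zfs V E B \<and> card B = zf_number V E}. eptw_set V E w B)"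

text \<open>The star K_{1,n}: centre 0, leaves 1..n.\<close>
definition star_V :: "nat \<Rightarrow> nat set" where "star_V n = {0..n}"
definition star_E :: "nat \<Rightarrow> nat \<Rightarrow> nat \<Rightarrow> bool" where
  "star_E n i j \<longleftrightarrow> (i = 0 \<and> 1 \<le> j \<and> j \<le> n) \<or> (j = 0 \<and> 1 \<le> i \<and> i \<le> n)"
definition star_w :: "(nat \<Rightarrow> real) \<Rightarrow> nat \<Rightarrow> nat \<Rightarrow> real" where
  "star_w ww i j = (if i = 0 then ww j else ww i)"

end

theory Submission
  imports Defs
begin

lemma cf_leaves:
  assumes i: "i \<in> {1..n}" and S: "S = {1..n}-{i}"
  shows "can_force (star_V n) (star_E n) S u v \<longleftrightarrow> u \<in> S \<and> v = 0"
proof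
  assume "can_force (star_V n) (star_E n) S u v"
  then have u: "u \<in> S" and w: "white_nbrs (star_V n) (star_E n) S u = {v}"
    by (auto simp: can_force_def)
  have "white_nbrs (star_V n) (star_E n) S u = {0}"
    using u S by (auto simp: white_nbrs_def star_V_def star_E_def)
  with u w show "u \<in> S \<and> v = 0" by auto
next
  assume a: "u \<in> S \<and> v = 0"
  have "white_nbrs (star_V n) (star_E n) S u = {0}"
    using a S by (auto simp: white_nbrs_def star_V_def star_E_def)
  with a show "can_force (star_V n) (star_E n) S u v" by (auto simp: can_force_def)
qed

lemma cf_center:
  assumes i: "i \<in> {1..n}" and S: "S = {1..n}-{i}"
  shows "can_force (star_V n) (star_E n) (insert 0 S) u v \<longleftrightarrow> u = 0 \<and> v = i"
proof
  assume "can_force (star_V n) (star_E n) (insert 0 S) u v"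
  then have u: "u \<in> insert 0 S" and w: "white_nbrs (star_V n) (star_E n) (insert 0 S) u = {v}"
    by (auto simp: can_force_def)
  show "u = 0 \<and> v = i"
  proof (cases "u = 0")
    case True
    have "white_nbrs (star_V n) (star_E n) (insert 0 S) u = {i}"
      using True i S by (auto simp: white_nbrs_def star_V_def star_E_def)
    with w True show ?thesis by auto
  next
    case False
    have "white_nbrs (star_V n) (star_E n) (insert 0 S) u = {}"
      using False u S by (auto simp: white_nbrs_def star_V_def star_E_def)
    with w show ?thesis by auto
  qed
next
  assume a: "u = 0 \<and> v = i"
  have "white_nbrs (star_V n) (star_E n) (insert 0 S) u = {i}"
    using a i S by (auto simp: white_nbrs_def star_V_def star_E_def)
  with a show "can_force (star_V n) (star_E n) (insert 0 S) u v" by (auto simp: can_force_def)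
qed

lemma cf_all: "\<not> can_force (star_V n) (star_E n) {0..n} u v"
  by (auto simp: can_force_def white_nbrs_def star_V_def)

lemma step_leaves:
  assumes i: "i \<in> {1..n}" and S: "S = {1..n}-{i}"
  shows "{v. \<exists>u. can_force (star_V n) (star_E n) S u v \<and> P u v} = (if \<exists>j\<in>S. P j 0 then {0} else {})"
  using cf_leaves[OF i S] by auto

lemma step_center:
  assumes i: "i \<in> {1..n}" and S: "S = {1..n}-{i}"
  shows "{v. \<exists>u. can_force (star_V n) (star_E n) (insert 0 S) u v \<and> P u v} = (if P 0 i then {i} else {})"
  using cf_center[OF i S] by auto

lemma step_all:
  shows "{v. \<exists>u. can_force (star_V n) (star_E n) {0..n} u v \<and> P u v} = {}"
  using cf_all by auto

lemma ins_full: "(i::nat) \<in> {1..n} \<Longrightarrow> S = {1..n}-{i} \<Longrightarrow> insert 0 S \<union> {i} = {0..n}"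
  by auto

lemma blue_formula:
  assumes i: "i \<in> {1..n}" and S: "S = {1..n}-{i}"
  shows "blue_at (star_V n) (star_E n) S \<omega> k =
    (if \<forall>r<k. \<forall>j\<in>S. \<not> \<omega> (r,j,0) then S
     else if (\<forall>s. (LEAST r. \<not> (\<forall>j\<in>S. \<not> \<omega> (r,j,0))) < s \<and> s < k \<longrightarrow> \<not> \<omega> (s,0,i))
     then insert 0 S else {0..n})"
proof (induction k)
  case 0
  then show ?case by simp
next
  case (Suc k)
  let ?nf = "\<lambda>r. \<forall>j\<in>S. \<not> \<omega> (r,j,0)"
  let ?T = "LEAST r. \<not> ?nf r"
  note sl = step_leaves[OF i S, of "\<lambda>u v. \<omega> (k,u,v)"]
  note sc = step_center[OF i S, of "\<lambda>u v. \<omega> (k,u,v)"]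
  note sa = step_all[of n "\<lambda>u v. \<omega> (k,u,v)"]
  show ?case
  proof (cases "\<forall>r<k. ?nf r")
    case True
    then have bk: "blue_at (star_V n) (star_E n) S \<omega> k = S" using Suc.IH by simp
    show ?thesis
    proof (cases "?nf k")
      case True
      have all: "\<forall>r<Suc k. ?nf r" using True \<open>\<forall>r<k. ?nf r\<close> less_Suc_eq by auto
      have nex: "\<not> (\<exists>j\<in>S. \<omega> (k,j,0))" using True by blast
      have "blue_at (star_V n) (star_E n) S \<omega> (Suc k) = S"
        by (simp only: blue_at.simps bk sl if_not_P[OF nex] Un_empty_right)
      then show ?thesis by (subst if_P[OF all])
    next
      case False
      have T: "?T = k" using False \<open>\<forall>r<k. ?nf r\<close>
        by (intro Least_equality) (auto simp: not_less[symmetric])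
      have nS: "\<not> (\<forall>r<Suc k. ?nf r)" using False by blast
      have ex: "\<exists>j\<in>S. \<omega> (k,j,0)" using False by blast
      have c2: "\<forall>s. ?T < s \<and> s < Suc k \<longrightarrow> \<not> \<omega> (s,0,i)" unfolding T using less_Suc_eq by auto
      have "blue_at (star_V n) (star_E n) S \<omega> (Suc k) = insert 0 S"
        by (simp only: blue_at.simps bk sl if_P[OF ex]) simp
      then show ?thesis by (subst if_not_P[OF nS], subst if_P[OF c2])
    qed
  next
    case False
    then have nS: "\<not> (\<forall>r<Suc k. ?nf r)" using less_SucI by blast
    from False obtain r where "r < k" "\<not> ?nf r" by blast
    then have Tk: "?T < k" using Least_le[of "\<lambda>r. \<not> ?nf r" r] by linarith
    show ?thesis
    proof (cases "\<forall>s. ?T < s \<and> s < k \<longrightarrow> \<not> \<omega> (s,0,i)")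
      case True
      then have bk: "blue_at (star_V n) (star_E n) S \<omega> k = insert 0 S"
        using Suc.IH False by (simp only: if_not_P[OF False] if_P[OF True] if_False)
      have eq: "(\<forall>s. ?T < s \<and> s < Suc k \<longrightarrow> \<not> \<omega> (s,0,i)) \<longleftrightarrow> \<not> \<omega> (k,0,i)"
      proof
        assume "\<forall>s. ?T < s \<and> s < Suc k \<longrightarrow> \<not> \<omega> (s,0,i)"
        then show "\<not> \<omega> (k,0,i)" using Tk by blast
      next
        assume "\<not> \<omega> (k,0,i)"
        then show "\<forall>s. ?T < s \<and> s < Suc k \<longrightarrow> \<not> \<omega> (s,0,i)" using True less_Suc_eq by blast
      qed
      show ?thesis
      proof (cases "\<omega> (k,0,i)")
        case True
        have "blue_at (star_V n) (star_E n) S \<omega> (Suc k) = {0..n}"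
          by (simp only: blue_at.simps bk sc if_P[OF True] ins_full[OF i S])
        moreover have "\<not> (\<forall>s. ?T < s \<and> s < Suc k \<longrightarrow> \<not> \<omega> (s,0,i))" using eq True by blast
        ultimately show ?thesis by (subst if_not_P[OF nS], subst if_not_P)
      next
        case False
        have "blue_at (star_V n) (star_E n) S \<omega> (Suc k) = insert 0 S"
          by (simp only: blue_at.simps bk sc if_not_P[OF False] Un_empty_right)
        moreover have "\<forall>s. ?T < s \<and> s < Suc k \<longrightarrow> \<not> \<omega> (s,0,i)" using eq False by blast
        ultimately show ?thesis by (subst if_not_P[OF nS], subst if_P)
      qed
    next
      case F2: False
      then have bk: "blue_at (star_V n) (star_E n) S \<omega> k = {0..n}"
        using Suc.IH False by (simp only: if_not_P[OF False] if_not_P[OF F2] if_False)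
      have c: "\<not> (\<forall>s. ?T < s \<and> s < Suc k \<longrightarrow> \<not> \<omega> (s,0,i))" using F2 less_SucI by blast
      have "blue_at (star_V n) (star_E n) S \<omega> (Suc k) = {0..n}"
        by (simp only: blue_at.simps bk sa Un_empty_right)
      then show ?thesis by (subst if_not_P[OF nS], subst if_not_P[OF c])
    qed
  qed
qed

lemma zf_leaves:
  assumes n: "n \<ge> 2" and i: "i \<in> {1..n}" and S: "S = {1..n}-{i}"
  shows "zf_step (star_V n) (star_E n) S = insert 0 S"
proof -
  have "\<exists>j\<in>S. True" using n i S by (intro bexI[of _ "if i = 1 then 2 else 1"]) auto
  then show ?thesis using step_leaves[OF i S, of "\<lambda>_ _. True"] by (auto simp: zf_step_def)
qed

lemma zf_center:
  assumes i: "i \<in> {1..n}" and S: "S = {1..n}-{i}"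
  shows "zf_step (star_V n) (star_E n) (insert 0 S) = {0..n}"
  using step_center[OF i S, of "\<lambda>_ _. True"] ins_full[OF i S] by (simp add: zf_step_def)

lemma zfs_leaves:
  assumes n: "n \<ge> 2" and i: "i \<in> {1..n}" and S: "S = {1..n}-{i}"
  shows "is_zfs (star_V n) (star_E n) S"
  unfolding is_zfs_def
proof
  show "S \<subseteq> star_V n" using S by (auto simp: star_V_def)
  show "\<exists>k. (zf_step (star_V n) (star_E n) ^^ k) S = star_V n"
  proof (rule exI[of _ 2])
    have "(zf_step (star_V n) (star_E n) ^^ 2) S = {0..n}"
      by (simp add: numeral_2_eq_2 zf_leaves[OF n i S] zf_center[OF i S])
    then show "(zf_step (star_V n) (star_E n) ^^ 2) S = star_V n" by (simp add: star_V_def)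
  qed
qed

lemma two_missing_step:
  assumes a: "a \<in> {1..n}" and b: "b \<in> {1..n}" and ab: "a \<noteq> b" and "a \<notin> T" "b \<notin> T"
  shows "a \<notin> zf_step (star_V n) (star_E n) T"
proof
  assume "a \<in> zf_step (star_V n) (star_E n) T"
  then obtain u where cf: "can_force (star_V n) (star_E n) T u a" using assms by (auto simp: zf_step_def)
  then have wn: "white_nbrs (star_V n) (star_E n) T u = {a}" by (simp add: can_force_def)
  then have "star_E n u a" by (auto simp: white_nbrs_def)
  then have "u = 0" using a by (auto simp: star_E_def)
  then have "b \<in> white_nbrs (star_V n) (star_E n) T u" using b assms by (auto simp: white_nbrs_def star_E_def star_V_def)
  with wn ab show False by auto
qed

lemma two_missing:
  assumes a: "a \<in> {1..n}" and b: "b \<in> {1..n}" and ab: "a \<noteq> b" and "a \<notin> T" "b \<notin> T"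
  shows "a \<notin> (zf_step (star_V n) (star_E n) ^^ k) T \<and> b \<notin> (zf_step (star_V n) (star_E n) ^^ k) T"
  using assms
proof (induction k)
  case 0 then show ?case by simp
next
  case (Suc k)
  then show ?case using two_missing_step[OF a b ab] two_missing_step[OF b a ab[symmetric]] by auto
qed

lemma zfs_props:
  assumes n: "n \<ge> 2" and z: "is_zfs (star_V n) (star_E n) T"
  shows "n - 1 \<le> card T" "card T = n - 1 \<Longrightarrow> \<exists>i\<in>{1..n}. T = {1..n}-{i}"
proof -
  have TV: "T \<subseteq> {0..n}" using z by (auto simp: is_zfs_def star_V_def)
  then have fT: "finite T" using finite_subset by blast
  obtain k where k: "(zf_step (star_V n) (star_E n) ^^ k) T = {0..n}" using z by (auto simp: is_zfs_def star_V_def)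
  have le1: "card ({1..n} - T) \<le> Suc 0"
  proof (subst card_le_Suc0_iff_eq, simp, intro ballI, rule ccontr)
    fix a b assume a: "a \<in> {1..n} - T" and b: "b \<in> {1..n} - T" and ab: "a \<noteq> b"
    then have "a \<notin> (zf_step (star_V n) (star_E n) ^^ k) T" using two_missing[of a n b T k] by auto
    with k a show False by auto
  qed
  have c: "card {1..n} = card ({1..n} \<inter> T) + card ({1..n} - T)" by (rule card_Int_Diff) simp
  have ci: "card ({1..n} \<inter> T) \<le> card T" using fT by (intro card_mono) auto
  show "n - 1 \<le> card T" using c le1 ci by simp
  assume cT: "card T = n - 1"
  have "0 \<notin> T"
  proof
    assume "0 \<in> T"
    then have "insert 0 ({1..n} \<inter> T) \<subseteq> T" by auto
    then have "card (insert 0 ({1..n} \<inter> T)) \<le> card T" using fT by (intro card_mono) auto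
    then have "Suc (card ({1..n} \<inter> T)) \<le> card T" by simp
    then show False using c le1 cT n by simp
  qed
  have TL: "T \<subseteq> {1..n}"
  proof
    fix x assume "x \<in> T"
    then have "x \<noteq> 0" "x \<le> n" using \<open>0 \<notin> T\<close> TV by (metis, auto)
    then show "x \<in> {1..n}" by simp
  qed
  then have "{1..n} \<inter> T = T" by auto
  then have "card ({1..n} - T) = 1" using c cT n by simp
  then obtain i where i: "{1..n} - T = {i}" using card_1_singletonE by blast
  then have "i \<in> {1..n}" by auto
  moreover have "T = {1..n} - {i}" using i TL by auto
  ultimately show "\<exists>i\<in>{1..n}. T = {1..n}-{i}" by blast
qed

lemma card_leaves: "i \<in> {1..n} \<Longrightarrow> card ({1..n}-{i}) = n - 1"
  by simp

lemma zf_number_star: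
  assumes n: "n \<ge> 2"
  shows "zf_number (star_V n) (star_E n) = n - 1"
  unfolding zf_number_def
proof (rule Least_equality)
  show "\<exists>B. is_zfs (star_V n) (star_E n) B \<and> card B = n - 1"
    using zfs_leaves[OF n _ refl, of 1] n by (intro exI[of _ "{1..n}-{1}"]) auto
  show "\<And>y. \<exists>B. is_zfs (star_V n) (star_E n) B \<and> card B = y \<Longrightarrow> n - 1 \<le> y"
    using zfs_props(1)[OF n] by blast
qed

lemma min_zfs_set:
  assumes n: "n \<ge> 2"
  shows "{B. is_zfs (star_V n) (star_E n) B \<and> card B = zf_number (star_V n) (star_E n)}
     = (\<lambda>i. {1..n}-{i}) ` {1..n}"
  using zfs_props(2)[OF n] zfs_leaves[OF n _ refl] card_leaves
  by (auto simp: zf_number_star[OF n])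

lemma coin_prob: "prob_space (coin_space w)"
  unfolding coin_space_def
  by (rule prob_space_PiM) (auto split: prod.split simp: prob_space_measure_pmf)

lemma space_coin: "space (coin_space w) = UNIV"
  by (auto simp: coin_space_def space_PiM PiE_iff split: prod.split)

lemma box_emb:
  fixes J :: "(nat \<times> 'a \<times> 'a) set" and w :: "'a \<Rightarrow> 'a \<Rightarrow> real"
  shows "{\<omega>. \<forall>x\<in>J. \<not> \<omega> x} = prod_emb UNIV (\<lambda>(k,u,v). measure_pmf (bernoulli_pmf (w u v))) J (PiE J (\<lambda>_. {False}))"
proof (rule set_eqI)
  fix \<omega> :: "nat \<times> 'a \<times> 'a \<Rightarrow> bool"
  show "\<omega> \<in> {\<omega>. \<forall>x\<in>J. \<not> \<omega> x} \<longleftrightarrow> \<omega> \<in> prod_emb UNIV (\<lambda>(k,u,v). measure_pmf (bernoulli_pmf (w u v))) J (PiE J (\<lambda>_. {False}))"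
    unfolding prod_emb_iff restrict_PiE_iff by (auto split: prod.split)
qed

lemma box_sets:
  fixes J :: "(nat \<times> 'a \<times> 'a) set" and w :: "'a \<Rightarrow> 'a \<Rightarrow> real"
  assumes "finite J"
  shows "{\<omega>. \<forall>x\<in>J. \<not> \<omega> x} \<in> sets (coin_space w)"
  unfolding coin_space_def
  by (subst box_emb, rule sets_PiM_I) (use assms in \<open>auto split: prod.split\<close>)

lemma box_emeasure:
  fixes J :: "(nat \<times> 'a \<times> 'a) set" and w :: "'a \<Rightarrow> 'a \<Rightarrow> real"
  assumes "finite J" and "\<And>k u v. (k,u,v) \<in> J \<Longrightarrow> 0 \<le> w u v \<and> w u v \<le> 1"
  shows "emeasure (coin_space w) {\<omega>. \<forall>x\<in>J. \<not> \<omega> x} = ennreal (\<Prod>x\<in>J. (case x of (k,u,v) \<Rightarrow> 1 - w u v))"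
proof -
  have "emeasure (coin_space w) {\<omega>. \<forall>x\<in>J. \<not> \<omega> x} =
     (\<Prod>x\<in>J. emeasure ((\<lambda>(k,u,v). measure_pmf (bernoulli_pmf (w u v))) x) {False})"
    unfolding coin_space_def
    by (subst box_emb, rule emeasure_PiM_emb) (use assms in \<open>auto split: prod.split simp: prob_space_measure_pmf\<close>)
  also have "\<dots> = (\<Prod>x\<in>J. ennreal (case x of (k,u,v) \<Rightarrow> 1 - w u v))"
    by (rule prod.cong) (use assms in \<open>auto split: prod.split simp: emeasure_pmf_single\<close>)
  also have "\<dots> = ennreal (\<Prod>x\<in>J. (case x of (k,u,v) \<Rightarrow> 1 - w u v))"
    by (rule prod_ennreal) (use assms in \<open>auto split: prod.split\<close>)
  finally show ?thesis .
qed

lemma sum_ones_le: "(\<Sum>k. if k \<le> N then (1::ennreal) else 0) = of_nat (Suc N)"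
proof -
  have "(\<Sum>k. if k \<le> N then (1::ennreal) else 0) = (\<Sum>k\<in>{..N}. if k \<le> N then (1::ennreal) else 0)"
    by (rule suminf_finite) auto
  also have "\<dots> = of_nat (Suc N)" by simp
  finally show ?thesis .
qed

lemma sum_ones_all: "(\<Sum>k::nat. (1::ennreal)) = \<infinity>"
proof -
  have "(SUP N. of_nat N :: ennreal) \<le> (\<Sum>k::nat. (1::ennreal))"
  proof (rule SUP_least)
    fix N :: nat
    have "(\<Sum>k<N. (1::ennreal)) \<le> (\<Sum>k. (1::ennreal))" by (rule sum_le_suminf) auto
    then show "of_nat N \<le> (\<Sum>k::nat. (1::ennreal))" by simp
  qed
  then show ?thesis using ennreal_SUP_of_nat_eq_top by (simp add: top_unique)
qed

lemma ptw_decomp: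
  assumes i: "i \<in> {1..n}" and S: "S = {1..n}-{i}"
  shows "ptw (star_V n) (star_E n) S \<omega> =
    (\<Sum>k. if \<forall>r<k. \<forall>j\<in>S. \<not> \<omega> (r,j,0) then 1 else 0) +
    (\<Sum>r. \<Sum>m. if (\<forall>s<r. \<forall>j\<in>S. \<not> \<omega> (s,j,0)) \<and> \<not> (\<forall>j\<in>S. \<not> \<omega> (r,j,0)) \<and> (\<forall>s<m. \<not> \<omega> (r+1+s,0,i)) then 1 else 0)"
proof -
  let ?nf = "\<lambda>r. \<forall>j\<in>S. \<not> \<omega> (r,j,0)"
  let ?b = "blue_at (star_V n) (star_E n) S \<omega>"
  note bf = blue_formula[OF i S, of \<omega>]
  have V: "star_V n = {0..n}" by (simp add: star_V_def)
  have "0 \<notin> S" using S by simp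
  then have SV: "S \<noteq> {0..n}" by (metis atLeastAtMost_iff le0)
  have "i \<notin> insert 0 S" "i \<in> {0..n}" using S i by auto
  then have S0V: "insert 0 S \<noteq> {0..n}" by metis
  show ?thesis
  proof (cases "\<forall>r. ?nf r")
    case True
    have "?b k = S" for k
    proof -
      have a: "\<forall>r<k. ?nf r" using True by blast
      show ?thesis by (subst bf, subst if_P[OF a], rule refl)
    qed
    then have "ptw (star_V n) (star_E n) S \<omega> = \<infinity>" using SV by (simp add: ptw_def V)
    moreover have "(\<Sum>k. if \<forall>r<k. ?nf r then 1 else (0::ennreal)) = \<infinity>" using True sum_ones_all by simp
    ultimately show ?thesis by simp
  next
    case False
    define T where "T = (LEAST r. \<not> ?nf r)"
    from False obtain r0 where r0: "\<not> ?nf r0" by blast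
    have nT: "\<not> ?nf T" unfolding T_def by (rule LeastI[of "\<lambda>r. \<not> ?nf r", OF r0])
    have bT: "?nf s" if "s < T" for s
      using not_less_Least[of s "\<lambda>r. \<not> ?nf r"] that unfolding T_def by blast
    have allk: "(\<forall>r<k. ?nf r) \<longleftrightarrow> k \<le> T" for k
    proof
      assume A: "\<forall>r<k. ?nf r"
      show "k \<le> T"
      proof (rule ccontr)
        assume "\<not> k \<le> T"
        then have "T < k" by simp
        with A nT show False by blast
      qed
    next
      assume "k \<le> T"
      then show "\<forall>r<k. ?nf r" using bT by auto
    qed
    have s1: "(\<Sum>k. if \<forall>r<k. ?nf r then 1 else (0::ennreal)) = of_nat (Suc T)"
      using sum_ones_le[of T] allk by simp
    have rT: "(\<forall>s<r. ?nf s) \<and> \<not> ?nf r \<longleftrightarrow> r = T" for r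
    proof
      assume A: "(\<forall>s<r. ?nf s) \<and> \<not> ?nf r"
      show "r = T"
      proof (rule linorder_cases[of r T])
        assume "r < T" then show ?thesis using A bT by blast
      next
        assume "T < r" then show ?thesis using A nT by blast
      qed
    next
      assume "r = T" then show "(\<forall>s<r. ?nf s) \<and> \<not> ?nf r" using nT bT by blast
    qed
    let ?g = "\<lambda>m. if \<forall>s<m. \<not> \<omega> (T+1+s,0,i) then 1 else (0::ennreal)"
    have s2: "(\<Sum>r. \<Sum>m. if (\<forall>s<r. ?nf s) \<and> \<not> ?nf r \<and> (\<forall>s<m. \<not> \<omega> (r+1+s,0,i)) then 1 else (0::ennreal))
        = (\<Sum>m. ?g m)"
    proof -
      have "(\<Sum>r. \<Sum>m. if (\<forall>s<r. ?nf s) \<and> \<not> ?nf r \<and> (\<forall>s<m. \<not> \<omega> (r+1+s,0,i)) then 1 else (0::ennreal))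
          = (\<Sum>r\<in>{T}. \<Sum>m. if (\<forall>s<r. ?nf s) \<and> \<not> ?nf r \<and> (\<forall>s<m. \<not> \<omega> (r+1+s,0,i)) then 1 else (0::ennreal))"
      proof (rule suminf_finite)
        fix r assume "r \<notin> {T}"
        then have c: "\<not> ((\<forall>s<r. ?nf s) \<and> \<not> ?nf r)" using rT by blast
        show "(\<Sum>m. if (\<forall>s<r. ?nf s) \<and> \<not> ?nf r \<and> (\<forall>s<m. \<not> \<omega> (r+1+s,0,i)) then 1 else (0::ennreal)) = 0"
        proof -
          have c2: "\<not> ((\<forall>s<r. ?nf s) \<and> \<not> ?nf r \<and> (\<forall>s<m. \<not> \<omega> (r+1+s,0,i)))" for m using c by blast
          show ?thesis by (simp only: if_not_P[OF c2] suminf_zero)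
        qed
      qed simp
      also have "\<dots> = (\<Sum>m. ?g m)" using rT[of T] by simp
      finally show ?thesis .
    qed
    have bk2: "?b k = (if k \<le> T then S else if (\<forall>s. T < s \<and> s < k \<longrightarrow> \<not> \<omega> (s,0,i)) then insert 0 S else {0..n})" for k
      by (subst bf) (simp only: allk T_def[symmetric])
    have bV: "?b k = {0..n} \<longleftrightarrow> T < k \<and> \<not> (\<forall>s. T < s \<and> s < k \<longrightarrow> \<not> \<omega> (s,0,i))" for k
    proof (cases "k \<le> T")
      case True then show ?thesis using SV by (subst bk2) simp
    next
      case False
      then show ?thesis using S0V by (subst bk2) simp
    qed
    show ?thesis
    proof (cases "\<forall>m. \<not> \<omega> (T+1+m,0,i)")
      case True
      have "\<And>k. ?b k \<noteq> {0..n}"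
      proof
        fix k assume "?b k = {0..n}"
        then obtain s where "T < s" "\<omega> (s,0,i)" using bV by auto
        moreover have "s = T+1+(s-T-1)" using \<open>T < s\<close> by simp
        ultimately show False using True by metis
      qed
      then have "ptw (star_V n) (star_E n) S \<omega> = \<infinity>" by (simp add: ptw_def V)
      moreover have "(\<Sum>m. ?g m) = \<infinity>" using True sum_ones_all by simp
      ultimately show ?thesis using s2 by simp
    next
      case False
      define M where "M = (LEAST m. \<omega> (T+1+m,0,i))"
      from False obtain m0 where m0: "\<omega> (T+1+m0,0,i)" by blast
      have oM: "\<omega> (T+1+M,0,i)" unfolding M_def by (rule LeastI[of "\<lambda>m. \<omega> (T+1+m,0,i)", OF m0])
      have bM: "\<not> \<omega> (T+1+s,0,i)" if "s < M" for s
        using not_less_Least[of s "\<lambda>m. \<omega> (T+1+m,0,i)"] that unfolding M_def by blast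
      have gm: "(\<forall>s<m. \<not> \<omega> (T+1+s,0,i)) \<longleftrightarrow> m \<le> M" for m
      proof
        assume A: "\<forall>s<m. \<not> \<omega> (T+1+s,0,i)"
        show "m \<le> M"
        proof (rule ccontr)
          assume "\<not> m \<le> M"
          then have "M < m" by simp
          with A oM show False by blast
        qed
      next
        assume "m \<le> M"
        then show "\<forall>s<m. \<not> \<omega> (T+1+s,0,i)" using bM by auto
      qed
      have sg: "(\<Sum>m. ?g m) = of_nat (Suc M)" using sum_ones_le[of M] gm by simp
      have bVk: "\<And>k. ?b k = {0..n} \<longleftrightarrow> T + M + 2 \<le> k"
      proof
        fix k assume "?b k = {0..n}"
        then obtain s where s: "T < s" "s < k" "\<omega> (s,0,i)" using bV by auto
        have se: "T+1+(s-T-1) = s" using s by simp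
        have "\<not> (s - T - 1 < M)"
        proof
          assume "s - T - 1 < M"
          then have "\<not> \<omega> (T+1+(s-T-1),0,i)" by (rule bM)
          then show False using s se by simp
        qed
        then show "T + M + 2 \<le> k" using s by linarith
      next
        fix k assume "T + M + 2 \<le> k"
        then have "T < T+1+M" "T+1+M < k" "T < k" by linarith+
        then have "T < k \<and> \<not> (\<forall>s. T < s \<and> s < k \<longrightarrow> \<not> \<omega> (s,0,i))"
          using oM by blast
        then show "?b k = {0..n}" using bV by blast
      qed
      have bVk': "?b k = star_V n \<longleftrightarrow> T + M + 2 \<le> k" for k using bVk[of k] V by metis
      have ex: "\<exists>k. ?b k = star_V n" using bVk' by blast
      have "(LEAST k. ?b k = star_V n) = T + M + 2"
        by (rule Least_equality) (simp_all only: bVk' order_refl)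
      then have "ptw (star_V n) (star_E n) S \<omega> = of_nat (T + M + 2)" using ex by (simp add: ptw_def)
      then show ?thesis using s1 s2 sg by simp
    qed
  qed
qed

lemma eptw_leaf:
  assumes n: "n \<ge> 2" and ww: "\<And>j. 1 \<le> j \<Longrightarrow> j \<le> n \<Longrightarrow> 0 < ww j \<and> ww j < 1"
    and i: "i \<in> {1..n}"
  shows "eptw_set (star_V n) (star_E n) (star_w ww) ({1..n}-{i}) =
    ennreal (1 / ww i + 1 / (1 - (\<Prod>j\<in>{1..n} - {i}. 1 - ww j)))"
proof -
  define S where "S = {1..n}-{i}"
  define W where "W = (\<Prod>j\<in>S. 1 - ww j)"
  define q where "q = ww i"
  define M where "M = coin_space (star_w ww)"
  have q: "0 < q" "q < 1" using ww i unfolding q_def by auto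
  have wS: "\<And>j. j \<in> S \<Longrightarrow> 0 < ww j \<and> ww j < 1" using ww unfolding S_def by auto
  have fS: "finite S" unfolding S_def by simp
  have W0: "0 < W" unfolding W_def by (intro prod_pos) (force dest: wS)
  have "(if i = 1 then 2 else 1) \<in> S" unfolding S_def using n i by auto
  then obtain j0 where j0: "j0 \<in> S" by blast
  have We: "W = (1 - ww j0) * (\<Prod>j\<in>S-{j0}. 1 - ww j)" unfolding W_def using j0 fS by (simp add: prod.remove)
  have P1: "(\<Prod>j\<in>S-{j0}. 1 - ww j) \<le> 1" by (intro prod_le_1) (force dest: wS)
  have wj0: "0 < ww j0" "ww j0 < 1" using wS[OF j0] by auto
  have "(1 - ww j0) * (\<Prod>j\<in>S-{j0}. 1 - ww j) \<le> (1 - ww j0) * 1"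
    using P1 wj0 by (intro mult_left_mono) auto
  then have "W \<le> 1 - ww j0" using We by simp
  then have W1: "W < 1" using wj0 by linarith
  define JA where "JA r = (\<lambda>(s,j). (s,j,0::nat)) ` ({..<r} \<times> S)" for r :: nat
  define JD where "JD r m = (\<lambda>s. (r+1+s, 0::nat, i)) ` {..<m}" for r m :: nat
  let ?f = "\<lambda>x. case x of (k::nat,u,v) \<Rightarrow> 1 - star_w ww u v"
  have finJA: "finite (JA r)" for r unfolding JA_def using fS by (intro finite_imageI finite_cartesian_product) auto
  have finJD: "finite (JD r m)" for r m unfolding JD_def by simp
  have S0: "0 \<notin> S" unfolding S_def by simp
  have disj: "JA r \<inter> JD r' m = {}" for r r' m unfolding JA_def JD_def using S0 i by auto
  have prodA: "(\<Prod>x\<in>JA r. ?f x) = W ^ r" for r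
  proof -
    have inj: "inj_on (\<lambda>(s,j). (s,j,0::nat)) ({..<r} \<times> S)" by (auto simp: inj_on_def)
    have "(\<Prod>x\<in>JA r. ?f x) = (\<Prod>x\<in>{..<r} \<times> S. ?f ((\<lambda>(s,j). (s,j,0::nat)) x))"
      unfolding JA_def by (subst prod.reindex[OF inj]) (simp only: comp_def)
    also have "\<dots> = (\<Prod>x\<in>{..<r} \<times> S. (case x of (s,j) \<Rightarrow> 1 - ww j))"
      by (rule prod.cong) (use S0 in \<open>auto simp: star_w_def\<close>)
    also have "\<dots> = (\<Prod>s\<in>{..<r}. \<Prod>j\<in>S. 1 - ww j)" by (rule prod.cartesian_product[symmetric])
    also have "\<dots> = W ^ r" unfolding W_def by simp
    finally show ?thesis .
  qed
  have prodD: "(\<Prod>x\<in>JD r m. ?f x) = (1 - q) ^ m" for r m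
  proof -
    have inj: "inj_on (\<lambda>s. (r+1+s, 0::nat, i)) {..<m}" by (auto simp: inj_on_def)
    have "(\<Prod>x\<in>JD r m. ?f x) = (\<Prod>s\<in>{..<m}. ?f (r+1+s, 0::nat, i))"
      unfolding JD_def by (subst prod.reindex[OF inj]) (simp only: comp_def)
    also have "\<dots> = (1 - q) ^ m" by (simp add: star_w_def q_def)
    finally show ?thesis .
  qed
  have bnd: "\<And>k u v. (k,u,v) \<in> JA r \<union> JD r' m \<Longrightarrow> 0 \<le> star_w ww u v \<and> star_w ww u v \<le> 1" for r r' m
    unfolding JA_def JD_def using wS q S0 by (auto simp: star_w_def q_def less_imp_le)
  have emb: "emeasure M {\<omega>. \<forall>x\<in>JA r \<union> JD r' m. \<not> \<omega> x} = ennreal (W ^ r * (1 - q) ^ m)" for r r' m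
  proof -
    have "emeasure M {\<omega>. \<forall>x\<in>JA r \<union> JD r' m. \<not> \<omega> x} = ennreal (\<Prod>x\<in>JA r \<union> JD r' m. ?f x)"
      unfolding M_def by (rule box_emeasure) (use finJA finJD bnd in auto)
    also have "(\<Prod>x\<in>JA r \<union> JD r' m. ?f x) = W ^ r * (1 - q) ^ m"
    proof -
      have "(\<Prod>x\<in>JA r \<union> JD r' m. ?f x) = (\<Prod>x\<in>JA r. ?f x) * (\<Prod>x\<in>JD r' m. ?f x)"
        by (rule prod.union_disjoint[OF finJA finJD disj])
      then show ?thesis by (simp only: prodA prodD)
    qed
    finally show ?thesis .
  qed
  have setsb: "{\<omega>. \<forall>x\<in>JA r \<union> JD r' m. \<not> \<omega> x} \<in> sets M" for r r' m
    unfolding M_def by (rule box_sets) (use finJA finJD in auto)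
  define Sk where "Sk k = {\<omega>. \<forall>x\<in>JA k \<union> JD 0 0. \<not> \<omega> x}" for k
  define F where "F r m = {\<omega>. \<forall>x\<in>JA r \<union> JD r m. \<not> \<omega> x} - {\<omega>. \<forall>x\<in>JA (Suc r) \<union> JD r m. \<not> \<omega> x}" for r m
  have memB: "\<omega> \<in> {\<omega>. \<forall>x\<in>JA r \<union> JD r' m. \<not> \<omega> x} \<longleftrightarrow> (\<forall>s<r. \<forall>j\<in>S. \<not> \<omega> (s,j,0)) \<and> (\<forall>s<m. \<not> \<omega> (r'+1+s,0,i))" for \<omega> r r' m
    unfolding JA_def JD_def by auto
  have sucA: "(\<forall>s<Suc r. \<forall>j\<in>S. \<not> \<omega> (s,j,0)) \<longleftrightarrow> (\<forall>s<r. \<forall>j\<in>S. \<not> \<omega> (s,j,0)) \<and> (\<forall>j\<in>S. \<not> \<omega> (r,j,0))" for \<omega> r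
    using less_Suc_eq by auto
  have memS: "\<omega> \<in> Sk k \<longleftrightarrow> (\<forall>r<k. \<forall>j\<in>S. \<not> \<omega> (r,j,0))" for \<omega> k
    unfolding Sk_def memB by simp
  have memF: "\<omega> \<in> F r m \<longleftrightarrow> (\<forall>s<r. \<forall>j\<in>S. \<not> \<omega> (s,j,0)) \<and> \<not> (\<forall>j\<in>S. \<not> \<omega> (r,j,0)) \<and> (\<forall>s<m. \<not> \<omega> (r+1+s,0,i))" for \<omega> r m
    unfolding F_def Diff_iff memB sucA by blast
  have setsS: "Sk k \<in> sets M" for k unfolding Sk_def by (rule setsb)
  have setsF: "F r m \<in> sets M" for r m unfolding F_def using setsb by auto
  have emS: "emeasure M (Sk k) = ennreal (W ^ k)" for k unfolding Sk_def using emb[of k 0 0] by simp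
  have emF: "emeasure M (F r m) = ennreal (W ^ r * (1 - W) * (1 - q) ^ m)" for r m
  proof -
    have sub: "{\<omega>. \<forall>x\<in>JA (Suc r) \<union> JD r m. \<not> \<omega> x} \<subseteq> {\<omega>. \<forall>x\<in>JA r \<union> JD r m. \<not> \<omega> x}"
      by (rule subsetI) (simp only: memB sucA, blast)
    have "emeasure M (F r m) = ennreal (W ^ r * (1 - q) ^ m) - ennreal (W ^ Suc r * (1 - q) ^ m)"
      unfolding F_def using emb[of r r m] emb[of "Suc r" r m] setsb sub
      by (subst emeasure_Diff) auto
    also have "\<dots> = ennreal (W ^ r * (1 - q) ^ m - W ^ Suc r * (1 - q) ^ m)"
      using W0 q by (intro ennreal_minus) auto
    also have "W ^ r * (1 - q) ^ m - W ^ Suc r * (1 - q) ^ m = W ^ r * (1 - W) * (1 - q) ^ m"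
      by (simp add: algebra_simps)
    finally show ?thesis .
  qed
  have pw: "ptw (star_V n) (star_E n) S \<omega> = (\<Sum>k. indicator (Sk k) \<omega>) + (\<Sum>r. \<Sum>m. indicator (F r m) \<omega>)" for \<omega>
    unfolding ptw_decomp[OF i S_def] by (simp add: indicator_def memS memF of_bool_def)
  have "eptw_set (star_V n) (star_E n) (star_w ww) S = (\<integral>\<^sup>+ \<omega>. (\<Sum>k. indicator (Sk k) \<omega>) + (\<Sum>r. \<Sum>m. indicator (F r m) \<omega>) \<partial>M)"
    unfolding eptw_set_def M_def pw ..
  also have "\<dots> = (\<integral>\<^sup>+ \<omega>. (\<Sum>k. indicator (Sk k) \<omega>) \<partial>M) + (\<integral>\<^sup>+ \<omega>. (\<Sum>r. \<Sum>m. indicator (F r m) \<omega>) \<partial>M)"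
    using setsS setsF by (intro nn_integral_add) auto
  also have "(\<integral>\<^sup>+ \<omega>. (\<Sum>k. indicator (Sk k) \<omega>) \<partial>M) = (\<Sum>k. ennreal (W ^ k))"
    using setsS emS by (subst nn_integral_suminf) auto
  also have "(\<integral>\<^sup>+ \<omega>. (\<Sum>r. \<Sum>m. indicator (F r m) \<omega>) \<partial>M) = (\<Sum>r. \<Sum>m. ennreal (W ^ r * (1 - W) * (1 - q) ^ m))"
    using setsF emF by (subst nn_integral_suminf, measurable, subst nn_integral_suminf) auto
  also have "(\<Sum>k. ennreal (W ^ k)) = ennreal (1 / (1 - W))"
    using W0 W1 by (subst suminf_ennreal2) (auto simp: suminf_geometric summable_geometric)
  also have "(\<Sum>r. \<Sum>m. ennreal (W ^ r * (1 - W) * (1 - q) ^ m)) = (\<Sum>r. ennreal (W ^ r * ((1 - W) / q)))"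
  proof (rule suminf_cong)
    fix r
    have "(\<Sum>m. W ^ r * (1 - W) * (1 - q) ^ m) = W ^ r * (1 - W) * (1 / (1 - (1 - q)))"
      using q by (subst suminf_mult) (auto simp: suminf_geometric summable_geometric)
    then show "(\<Sum>m. ennreal (W ^ r * (1 - W) * (1 - q) ^ m)) = ennreal (W ^ r * ((1 - W) / q))"
      using q W0 W1 by (subst suminf_ennreal2) (auto intro!: summable_mult summable_geometric)
  qed
  also have "(\<Sum>r. ennreal (W ^ r * ((1 - W) / q))) = ennreal (1 / q)"
  proof -
    have "(\<Sum>r. W ^ r * ((1 - W) / q)) = 1 / (1 - W) * ((1 - W) / q)"
      using W0 W1 by (subst suminf_mult2[symmetric]) (auto simp: suminf_geometric summable_geometric)
    also have "\<dots> = 1 / q" using W1 by simp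
    finally show ?thesis using q W0 W1
      by (subst suminf_ennreal2) (auto intro!: summable_mult2 summable_geometric)
  qed
  also have "ennreal (1 / (1 - W)) + ennreal (1 / q) = ennreal (1 / q + 1 / (1 - W))"
    using q W1 by (subst ennreal_plus) auto
  finally show ?thesis unfolding S_def W_def q_def .
qed

theorem mainTheorem3:
  fixes n :: nat and ww :: "nat \<Rightarrow> real"
  assumes "n \<ge> 2"
    and "\<And>j. 1 \<le> j \<Longrightarrow> j \<le> n \<Longrightarrow> 0 < ww j \<and> ww j < 1"
  shows "eptw (star_V n) (star_E n) (star_w ww) =
    ennreal (Min ((\<lambda>i. 1 / ww i + 1 / (1 - (\<Prod>j\<in>{1..n} - {i}. 1 - ww j))) ` {1..n}))"
proof -
  define h where "h i = 1 / ww i + 1 / (1 - (\<Prod>j\<in>{1..n} - {i}. 1 - ww j))" for i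
  have ne: "{1..n} \<noteq> {}" using assms(1) by simp
  have "eptw (star_V n) (star_E n) (star_w ww) =
      (INF B \<in> (\<lambda>i. {1..n}-{i}) ` {1..n}. eptw_set (star_V n) (star_E n) (star_w ww) B)"
    unfolding eptw_def min_zfs_set[OF assms(1)] ..
  also have "\<dots> = (INF i \<in> {1..n}. eptw_set (star_V n) (star_E n) (star_w ww) ({1..n}-{i}))"
    by (simp add: image_image)
  also have "\<dots> = (INF i \<in> {1..n}. ennreal (h i))"
    unfolding h_def using eptw_leaf[OF assms] by (intro INF_cong) auto
  also have "\<dots> = Min (ennreal ` h ` {1..n})"
    using ne by (simp add: image_image cInf_eq_Min)
  also have "\<dots> = ennreal (Min (h ` {1..n}))"
    using ne by (intro mono_Min_commute[symmetric]) (auto intro: monoI ennreal_leI)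
  finally show ?thesis unfolding h_def .
qed

end
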